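(* There exists a universal constant $C>0$ such that the following holds. Let $0<\varepsilon<1$, $d,k,\lambda\in\mathbb{N}$, $t=\lceil C\varepsilon^{-2}(\lambda\log(2/\varepsilon)+\log(k+1))\rceil$, and let $G\in\mathbb{R}^{t\times d}$ be a Gaussian JL map. Then for every finite set $P\subset\mathbb{R}^d$ with $\operatorname{ddim}(P)=\lambda$, with probability at least $2/3$, for all $x_1,x_2\in P$, $$(1-\varepsilon)\|x_1-x_2\|-\varepsilon KC_k(P)\le\|Gx_1-Gx_2\|\le(1+\varepsilon)\|x_1-x_2\|+\varepsilon KC_k(P).$$
   Context: Norms are Euclidean. A Gaussian JL map is a random $t\times d$ matrix with i.i.d. $\mathcal{N}(0,1/t)$ entries. The doubling dimension $\operatorname{ddim}(X)$ of $X\subset\mathbb{R}^d$ is the smallest $\lambda$ such that for every ball $B$ of radius $r$, $X\cap B$ can be covered by $2^\lambda$ balls of radius $r/2$. $KC_k(P)$ is the optimal $k$-center radius: $KC_k(P)=\min_{S\subseteq P,|S|=k}\max_{x\in P}\min_{s\in S}\|x-s\|$. *)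

theory Defs
  imports "HOL-Probability.Probability"
begin

text \<open>Points of R^d are represented as functions nat => real vanishing outside {..<d}.\<close>

definition Rd :: "nat \<Rightarrow> (nat \<Rightarrow> real) set" where
  "Rd d = {x. \<forall>i\<ge>d. x i = 0}"

definition enorm :: "nat \<Rightarrow> (nat \<Rightarrow> real) \<Rightarrow> real" where
  "enorm d x = sqrt (\<Sum>i<d. (x i)\<^sup>2)"

definition edist :: "nat \<Rightarrow> (nat \<Rightarrow> real) \<Rightarrow> (nat \<Rightarrow> real) \<Rightarrow> real" where
  "edist d x y = enorm d (\<lambda>i. x i - y i)"

definition ecball :: "nat \<Rightarrow> (nat \<Rightarrow> real) \<Rightarrow> real \<Rightarrow> (nat \<Rightarrow> real) set" where
  "ecball d c r = {x \<in> Rd d. edist d c x \<le> r}"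

definition doubling_ok :: "nat \<Rightarrow> (nat \<Rightarrow> real) set \<Rightarrow> real \<Rightarrow> bool" where
  "doubling_ok d X lam \<longleftrightarrow>
     (\<forall>c \<in> Rd d. \<forall>r>0. \<exists>Cs. finite Cs \<and> Cs \<subseteq> Rd d \<and> real (card Cs) \<le> 2 powr lam \<and>
        X \<inter> ecball d c r \<subseteq> (\<Union>s\<in>Cs. ecball d s (r/2)))"

definition ddim :: "nat \<Rightarrow> (nat \<Rightarrow> real) set \<Rightarrow> real" where
  "ddim d X = Inf {lam. doubling_ok d X lam}"

definition KC :: "nat \<Rightarrow> nat \<Rightarrow> (nat \<Rightarrow> real) set \<Rightarrow> real" where
  "KC d k P = Min ((\<lambda>S. Max ((\<lambda>x. Min ((\<lambda>s. edist d x s) ` S)) ` P))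
                    ` {S. S \<subseteq> P \<and> S \<noteq> {} \<and> card S \<le> k})"

text \<open>Gaussian JL map: t x d matrix with i.i.d. N(0,1/t) entries (std. dev. 1/sqrt t).\<close>

definition gauss_JL :: "nat \<Rightarrow> nat \<Rightarrow> (nat \<times> nat \<Rightarrow> real) measure" where
  "gauss_JL t d = (\<Pi>\<^sub>M ij \<in> {..<t} \<times> {..<d}. density lborel (normal_density 0 (1 / sqrt (real t))))"

definition mat_apply :: "nat \<Rightarrow> nat \<Rightarrow> (nat \<times> nat \<Rightarrow> real) \<Rightarrow> (nat \<Rightarrow> real) \<Rightarrow> (nat \<Rightarrow> real)" where
  "mat_apply t d G x = (\<lambda>i. if i < t then (\<Sum>j<d. G (i, j) * x j) else 0)"

end

theory Submission
  imports Defs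
begin

definition NN :: "nat \<Rightarrow> real measure" where
  "NN t = density lborel (normal_density 0 (1 / sqrt (real t)))"

lemma gauss_JL_alt: "gauss_JL t d = PiM ({..<t} \<times> {..<d}) (\<lambda>_. NN t)"
  unfolding gauss_JL_def NN_def by simp

lemma prob_NN: "0 < t \<Longrightarrow> prob_space (NN t)"
  unfolding NN_def by (rule prob_space_normal_density) simp

lemma prob_gauss: "0 < t \<Longrightarrow> prob_space (gauss_JL t d)"
  unfolding gauss_JL_alt by (rule prob_space_PiM) (rule prob_NN)

lemma sets_NN[simp]: "sets (NN t) = sets borel"
  unfolding NN_def by simp

lemma meas_coord:
  assumes "i < t" "j < d"
  shows "(\<lambda>G. G (i,j)) \<in> borel_measurable (gauss_JL t d)"
proof -
  have "(\<lambda>G. G (i,j)) \<in> measurable (gauss_JL t d) (NN t)"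
    unfolding gauss_JL_alt by (rule measurable_component_singleton) (use assms in auto)
  moreover have "measurable (gauss_JL t d) (NN t) = measurable (gauss_JL t d) borel"
    by (rule measurable_cong_sets) simp_all
  ultimately show ?thesis by simp
qed

lemma meas_mat_apply[measurable]:
  "(\<lambda>G. mat_apply t d G x i) \<in> borel_measurable (gauss_JL t d)"
  unfolding mat_apply_def
  by (cases "i < t") (auto intro!: borel_measurable_sum borel_measurable_times meas_coord)

lemma meas_edist[measurable]:
  "(\<lambda>G. edist t (mat_apply t d G x) (mat_apply t d G y)) \<in> borel_measurable (gauss_JL t d)"
  unfolding edist_def enorm_def
  by measurable

lemma coord_distr:
  assumes "0 < t" "i < t" "j < d"
  shows "distributed (gauss_JL t d) lborel (\<lambda>G. G (i,j)) (\<lambda>x. ennreal (normal_density 0 (1 / sqrt (real t)) x))"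
proof -
  have "distr (gauss_JL t d) lborel (\<lambda>G. G (i,j)) = distr (gauss_JL t d) (NN t) (\<lambda>G. G (i,j))"
    by (rule distr_cong) auto
  also have "\<dots> = NN t" unfolding gauss_JL_alt
    by (rule distr_PiM_component) (use assms prob_NN in auto)
  finally show ?thesis unfolding distributed_def NN_def using meas_coord[OF assms(2,3)] by auto
qed

lemma coord_indep:
  assumes "0 < t"
  shows "prob_space.indep_vars (gauss_JL t d) (\<lambda>_. borel) (\<lambda>ij G. G ij) ({..<t} \<times> {..<d})"
proof -
  interpret prob_space "gauss_JL t d" by (rule prob_gauss[OF assms])
  show ?thesis
  proof (cases "d = 0")
    case True show ?thesis unfolding indep_vars_def indep_sets_def using True by auto
  next
    case False
    have rv: "random_variable borel (\<lambda>G. G ij)" if "ij \<in> {..<t} \<times> {..<d}" for ij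
      using that meas_coord by auto
    have ne: "{..<t} \<times> {..<d} \<noteq> {}" using assms False by auto
    have L: "distr (gauss_JL t d) (PiM ({..<t} \<times> {..<d}) (\<lambda>_. borel)) (\<lambda>x. \<lambda>i\<in>{..<t} \<times> {..<d}. x i)
       = distr (gauss_JL t d) (gauss_JL t d) (\<lambda>x. x)"
    proof (rule distr_cong)
      show "sets (PiM ({..<t} \<times> {..<d}) (\<lambda>_. borel)) = sets (gauss_JL t d)"
        unfolding gauss_JL_alt by (rule sets_PiM_cong) simp_all
      fix x assume "x \<in> space (gauss_JL t d)"
      then have "x \<in> PiE ({..<t} \<times> {..<d}) (\<lambda>_. space (NN t))"
        unfolding gauss_JL_alt space_PiM .
      then show "restrict x ({..<t} \<times> {..<d}) = x" by (rule PiE_restrict)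
    qed simp
    have R: "PiM ({..<t} \<times> {..<d}) (\<lambda>i. distr (gauss_JL t d) borel (\<lambda>x. x i)) = gauss_JL t d"
      unfolding gauss_JL_alt
    proof (rule PiM_cong)
      fix ij assume ij: "ij \<in> {..<t} \<times> {..<d}"
      have "distr (PiM ({..<t} \<times> {..<d}) (\<lambda>_. NN t)) borel (\<lambda>x. x ij) = distr (PiM ({..<t} \<times> {..<d}) (\<lambda>_. NN t)) (NN t) (\<lambda>x. x ij)"
        by (rule distr_cong) auto
      also have "\<dots> = NN t" by (rule distr_PiM_component) (use ij assms prob_NN in auto)
      finally show "distr (PiM ({..<t} \<times> {..<d}) (\<lambda>_. NN t)) borel (\<lambda>x. x ij) = NN t" .
    qed simp
    show ?thesis
      apply (subst indep_vars_iff_distr_eq_PiM'[OF ne rv])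
      apply assumption
      apply (rule trans[OF L])
      apply (subst distr_id)
      apply (rule R[symmetric])
      done
  qed
qed

lemma row_distr:
  assumes t: "0 < t" and i: "i < t" and s2: "0 < (\<Sum>j<d. (v j)\<^sup>2)"
  shows "distributed (gauss_JL t d) lborel (\<lambda>G. \<Sum>j<d. G (i,j) * v j)
           (\<lambda>x. ennreal (normal_density 0 (sqrt (\<Sum>j<d. (v j)\<^sup>2) / sqrt t) x))"
proof -
  interpret prob_space "gauss_JL t d" by (rule prob_gauss[OF t])
  define J where "J = {j\<in>{..<d}. v j \<noteq> 0}"
  define K where "K = Pair i ` J"
  have finJ: "finite J" and Jsub: "J \<subseteq> {..<d}" by (auto simp: J_def)
  have Jne: "J \<noteq> {}"
  proof
    assume "J = {}"
    then have "\<forall>j<d. v j = 0" by (auto simp: J_def)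
    then have "(\<Sum>j<d. (v j)\<^sup>2) = 0" by simp
    with s2 show False by simp
  qed
  have Ksub: "K \<subseteq> {..<t}\<times>{..<d}" using i Jsub by (auto simp: K_def)
  have indK: "indep_vars (\<lambda>_. borel) (\<lambda>ij G. G ij * v (snd ij)) K"
    using indep_vars_compose2[OF indep_vars_subset[OF coord_indep[OF t] Ksub], of "\<lambda>ij x. x * v (snd ij)" "\<lambda>_. borel"]
    by simp
  have distK: "distributed (gauss_JL t d) lborel (\<lambda>G. G ij * v (snd ij))
       (\<lambda>x. ennreal (normal_density 0 (\<bar>v (snd ij)\<bar> * (1 / sqrt t)) x))" if ijK: "ij \<in> K" for ij
  proof -
    obtain j where j: "ij = (i,j)" "j \<in> J" using ijK unfolding K_def by auto
    have jd: "j < d" "v j \<noteq> 0" using j Jsub J_def by auto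
    have "distributed (gauss_JL t d) lborel (\<lambda>G. 0 + v j * G (i,j))
        (\<lambda>x. ennreal (normal_density (0 + v j * 0) (\<bar>v j\<bar> * (1 / sqrt t)) x))"
      by (rule normal_density_affine[OF coord_distr[OF t i jd(1)]]) (use jd t in auto)
    then show ?thesis using j by (simp add: mult.commute)
  qed
  have "distributed (gauss_JL t d) lborel (\<lambda>G. \<Sum>ij\<in>K. G ij * v (snd ij))
     (\<lambda>x. ennreal (normal_density (\<Sum>ij\<in>K. 0) (sqrt (\<Sum>ij\<in>K. (\<bar>v (snd ij)\<bar> * (1 / sqrt t))\<^sup>2)) x))"
  proof (rule sum_indep_normal)
    show "finite K" using finJ by (simp add: K_def)
    show "K \<noteq> {}" using Jne by (simp add: K_def)
    show "indep_vars (\<lambda>i. borel) (\<lambda>ij G. G ij * v (snd ij)) K" using indK .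
    fix ij assume "ij \<in> K"
    then show "0 < \<bar>v (snd ij)\<bar> * (1 / sqrt t)" using t by (auto simp: K_def J_def)
    show "distributed (gauss_JL t d) lborel (\<lambda>G. G ij * v (snd ij))
       (\<lambda>x. ennreal (normal_density 0 (\<bar>v (snd ij)\<bar> * (1 / sqrt t)) x))" using distK[OF \<open>ij \<in> K\<close>] .
  qed
  moreover have "(\<lambda>G. \<Sum>ij\<in>K. G ij * v (snd ij)) = (\<lambda>G. \<Sum>j<d. G (i,j) * v j)"
  proof
    fix G :: "nat \<times> nat \<Rightarrow> real"
    have "(\<Sum>ij\<in>K. G ij * v (snd ij)) = (\<Sum>j\<in>J. G (i,j) * v j)"
      unfolding K_def by (subst sum.reindex) (auto simp: inj_on_def)
    also have "\<dots> = (\<Sum>j<d. G (i,j) * v j)"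
      by (rule sum.mono_neutral_left) (auto simp: J_def)
    finally show "(\<Sum>ij\<in>K. G ij * v (snd ij)) = (\<Sum>j<d. G (i,j) * v j)" .
  qed
  moreover have "sqrt (\<Sum>ij\<in>K. (\<bar>v (snd ij)\<bar> * (1 / sqrt t))\<^sup>2) = sqrt (\<Sum>j<d. (v j)\<^sup>2) / sqrt t"
  proof -
    have "(\<Sum>ij\<in>K. (\<bar>v (snd ij)\<bar> * (1 / sqrt t))\<^sup>2) = (\<Sum>j\<in>J. (v j)\<^sup>2 / t)"
      unfolding K_def using t by (subst sum.reindex) (auto simp: inj_on_def power_mult_distrib power_divide)
    also have "\<dots> = (\<Sum>j<d. (v j)\<^sup>2 / t)"
      by (rule sum.mono_neutral_left) (auto simp: J_def)
    also have "\<dots> = (\<Sum>j<d. (v j)\<^sup>2) / t" by (simp add: sum_divide_distrib)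
    finally show ?thesis by (simp add: real_sqrt_divide)
  qed
  ultimately show ?thesis by simp
qed

lemma normal_sq_mgf:
  assumes tau: "0 < \<tau>" and c: "2 * c * \<tau>\<^sup>2 < 1"
  shows "(\<integral>\<^sup>+y. ennreal (normal_density 0 \<tau> y) * ennreal (exp (c * y\<^sup>2)) \<partial>lborel)
         = ennreal (1 / sqrt (1 - 2 * c * \<tau>\<^sup>2))"
proof -
  define q where "q = 1 - 2 * c * \<tau>\<^sup>2"
  have q: "0 < q" using c by (simp add: q_def)
  define \<tau>' where "\<tau>' = \<tau> / sqrt q"
  have tau': "0 < \<tau>'" using q tau by (simp add: \<tau>'_def)
  have t2: "\<tau>'\<^sup>2 = \<tau>\<^sup>2 / q" using q by (simp add: \<tau>'_def power_divide)
  have eq: "normal_density 0 \<tau> y * exp (c * y\<^sup>2) = (1 / sqrt q) * normal_density 0 \<tau>' y" for y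
  proof -
    have e: "- (y - 0)\<^sup>2 / (2 * \<tau>\<^sup>2) + c * y\<^sup>2 = - (y - 0)\<^sup>2 / (2 * \<tau>'\<^sup>2)"
      using q tau unfolding t2 q_def by (simp add: field_simps)
    have s: "sqrt (2 * pi * \<tau>'\<^sup>2) = sqrt (2 * pi * \<tau>\<^sup>2) / sqrt q"
      unfolding t2 by (simp add: real_sqrt_divide real_sqrt_mult)
    have ex: "exp (- (y - 0)\<^sup>2 / (2 * \<tau>\<^sup>2)) * exp (c * y\<^sup>2) = exp (- (y - 0)\<^sup>2 / (2 * \<tau>'\<^sup>2))"
      by (simp only: exp_add[symmetric] e)
    have "normal_density 0 \<tau> y * exp (c * y\<^sup>2) = 1 / sqrt (2 * pi * \<tau>\<^sup>2) * exp (- (y - 0)\<^sup>2 / (2 * \<tau>'\<^sup>2))"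
      unfolding normal_density_def mult.assoc ex ..
    also have "\<dots> = (1 / sqrt q) * normal_density 0 \<tau>' y"
      unfolding normal_density_def s using q by simp
    finally show ?thesis .
  qed
  have "(\<integral>\<^sup>+y. ennreal (normal_density 0 \<tau> y) * ennreal (exp (c * y\<^sup>2)) \<partial>lborel)
      = (\<integral>\<^sup>+y. ennreal (1 / sqrt q) * ennreal (normal_density 0 \<tau>' y) \<partial>lborel)"
    by (intro nn_integral_cong) (simp add: ennreal_mult''[symmetric] eq q)
  also have "\<dots> = ennreal (1 / sqrt q) * (\<integral>\<^sup>+y. ennreal (normal_density 0 \<tau>' y) \<partial>lborel)"
    by (rule nn_integral_cmult) simp
  also have "(\<integral>\<^sup>+y. ennreal (normal_density 0 \<tau>' y) \<partial>lborel) = 1"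
    using integrable_normal_density[OF tau'] integral_normal_density[OF tau']
    by (subst nn_integral_eq_integral) auto
  finally show ?thesis by (simp add: q_def)
qed

lemma rows_indep:
  fixes f :: "nat \<Rightarrow> real \<Rightarrow> 'b::topological_space"
  assumes t: "0 < t" and f: "\<And>i. f i \<in> borel_measurable borel"
  shows "prob_space.indep_vars (gauss_JL t d) (\<lambda>_. borel) (\<lambda>i G. f i (\<Sum>j<d. G (i,j) * v j)) {..<t}"
proof -
  interpret prob_space "gauss_JL t d" by (rule prob_gauss[OF t])
  define K where "K i = {i} \<times> {..<d}" for i :: nat
  have ind: "indep_vars (\<lambda>i. PiM (K i) (\<lambda>_. borel)) (\<lambda>i \<omega>. restrict (\<lambda>ij. \<omega> ij) (K i)) {..<t}"
    by (rule indep_vars_restrict[OF coord_indep[OF t]]) (auto simp: K_def disjoint_family_on_def)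
  have meas: "(\<lambda>r. f i (\<Sum>j<d. r (i,j) * v j)) \<in> measurable (PiM (K i) (\<lambda>_. borel)) borel" for i
  proof (rule measurable_compose[OF _ f])
    show "(\<lambda>r. \<Sum>j<d. r (i,j) * v j) \<in> borel_measurable (PiM (K i) (\<lambda>_. borel))"
    proof (intro borel_measurable_sum borel_measurable_times borel_measurable_const)
      fix j assume "j \<in> {..<d}"
      then show "(\<lambda>r. r (i, j)) \<in> borel_measurable (PiM (K i) (\<lambda>_. borel))"
        by (intro measurable_component_singleton) (auto simp: K_def)
    qed
  qed
  have "indep_vars (\<lambda>_. borel) (\<lambda>i \<omega>. (\<lambda>r. f i (\<Sum>j<d. r (i,j) * v j)) (restrict (\<lambda>ij. \<omega> ij) (K i))) {..<t}"
    by (rule indep_vars_compose2[OF ind meas])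
  moreover have "(\<lambda>\<omega>. (\<lambda>r. f i (\<Sum>j<d. r (i,j) * v j)) (restrict (\<lambda>ij. \<omega> ij) (K i)))
      = (\<lambda>G. f i (\<Sum>j<d. G (i,j) * v j))" for i
    by (auto simp: K_def intro!: arg_cong[where f="f i"] sum.cong)
  ultimately show ?thesis by simp
qed

lemma meas_Q:
  "(\<lambda>G. \<Sum>i<t. (\<Sum>j<d. G (i,j) * v j)\<^sup>2) \<in> borel_measurable (gauss_JL t d)"
  by (auto intro!: borel_measurable_sum borel_measurable_times meas_coord borel_measurable_power)

lemma mgf_Q:
  assumes t: "0 < t" and s2: "0 < (\<Sum>j<d. (v j)\<^sup>2)" and th: "\<theta> < 1"
  shows "(\<integral>\<^sup>+G. ennreal (exp (\<theta> * t / (2 * (\<Sum>j<d. (v j)\<^sup>2)) * (\<Sum>i<t. (\<Sum>j<d. G (i,j) * v j)\<^sup>2))) \<partial>gauss_JL t d)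
         = ennreal ((1 / sqrt (1 - \<theta>)) ^ t)"
proof -
  interpret prob_space "gauss_JL t d" by (rule prob_gauss[OF t])
  define s where "s = (\<Sum>j<d. (v j)\<^sup>2)"
  define c where "c = \<theta> * t / (2 * s)"
  define \<tau> where "\<tau> = sqrt s / sqrt t"
  have spos: "0 < s" using s2 by (simp add: s_def)
  have tau: "0 < \<tau>" using spos t by (simp add: \<tau>_def)
  have ct: "2 * c * \<tau>\<^sup>2 = \<theta>" using spos t by (simp add: c_def \<tau>_def power_divide)
  let ?Y = "\<lambda>i G. (\<Sum>j<d. G (i,j) * v j)"
  have "(\<integral>\<^sup>+G. ennreal (exp (c * (\<Sum>i<t. (?Y i G)\<^sup>2))) \<partial>gauss_JL t d)
      = (\<integral>\<^sup>+G. (\<Prod>i\<in>{..<t}. ennreal (exp (c * (?Y i G)\<^sup>2))) \<partial>gauss_JL t d)"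
    by (intro nn_integral_cong) (simp add: prod_ennreal exp_sum sum_distrib_left)
  also have "\<dots> = (\<Prod>i\<in>{..<t}. \<integral>\<^sup>+G. ennreal (exp (c * (?Y i G)\<^sup>2)) \<partial>gauss_JL t d)"
  proof (rule indep_vars_nn_integral)
    show "indep_vars (\<lambda>_. borel) (\<lambda>i G. ennreal (exp (c * (?Y i G)\<^sup>2))) {..<t}"
      using rows_indep[OF t, of "\<lambda>i y. ennreal (exp (c * y\<^sup>2))" d v] by simp
  qed auto
  also have "\<dots> = (\<Prod>i\<in>{..<t}. ennreal (1 / sqrt (1 - \<theta>)))"
  proof (rule prod.cong)
    fix i assume "i \<in> {..<t}"
    then have i: "i < t" by simp
    have "(\<integral>\<^sup>+G. ennreal (exp (c * (?Y i G)\<^sup>2)) \<partial>gauss_JL t d)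
        = (\<integral>\<^sup>+y. ennreal (normal_density 0 \<tau> y) * ennreal (exp (c * y\<^sup>2)) \<partial>lborel)"
      using distributed_nn_integral[OF row_distr[OF t i s2], of "\<lambda>y. ennreal (exp (c * y\<^sup>2))"]
      by (simp add: \<tau>_def s_def)
    also have "\<dots> = ennreal (1 / sqrt (1 - \<theta>))"
      using normal_sq_mgf[OF tau, of c] ct th by simp
    finally show "(\<integral>\<^sup>+G. ennreal (exp (c * (?Y i G)\<^sup>2)) \<partial>gauss_JL t d) = ennreal (1 / sqrt (1 - \<theta>))" .
  qed simp
  also have "\<dots> = ennreal ((1 / sqrt (1 - \<theta>)) ^ t)"
    using th by (simp add: ennreal_power)
  finally show ?thesis by (simp add: c_def s_def)
qed

lemma tail_Q:
  assumes t: "0 < t" and s2: "0 < (\<Sum>j<d. (v j)\<^sup>2)" and a: "0 < a" "a \<noteq> 1"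
  shows "measure (gauss_JL t d) {G \<in> space (gauss_JL t d).
            (1 - 1/a) * a * (\<Sum>j<d. (v j)\<^sup>2) \<le> (1 - 1/a) * (\<Sum>i<t. (\<Sum>j<d. G (i,j) * v j)\<^sup>2)}
         \<le> exp (- (t/2) * (a - 1 - ln a))"
proof -
  interpret prob_space "gauss_JL t d" by (rule prob_gauss[OF t])
  define s where "s = (\<Sum>j<d. (v j)\<^sup>2)"
  define \<theta> where "\<theta> = 1 - 1/a"
  define Q where "Q G = (\<Sum>i<t. (\<Sum>j<d. G (i,j) * v j)\<^sup>2)" for G
  define S where "S = {G \<in> space (gauss_JL t d). \<theta> * a * s \<le> \<theta> * Q G}"
  define c where "c = \<theta> * t / (2 * s)"
  have spos: "0 < s" using s2 by (simp add: s_def)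
  have th: "\<theta> < 1" using a by (simp add: \<theta>_def)
  have thA: "\<theta> * a = a - 1" using a by (simp add: \<theta>_def field_simps)
  note meas_Q[where t=t and d=d and v=v, measurable]
  have Sm: "S \<in> sets (gauss_JL t d)" unfolding S_def Q_def by measurable
  have key: "exp (\<theta> * t * a / 2) \<le> exp (c * Q G)" if "G \<in> S" for G
  proof -
    have "\<theta> * a * s \<le> \<theta> * Q G" using that by (simp add: S_def)
    then have "(t / (2 * s)) * (\<theta> * a * s) \<le> (t / (2 * s)) * (\<theta> * Q G)"
      using spos t by (intro mult_left_mono) auto
    moreover have "(t / (2 * s)) * (\<theta> * a * s) = \<theta> * t * a / 2" using spos by (simp add: field_simps)
    moreover have "(t / (2 * s)) * (\<theta> * Q G) = c * Q G" by (simp add: c_def field_simps)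
    ultimately show ?thesis by simp
  qed
  have "ennreal (exp (\<theta> * t * a / 2)) * emeasure (gauss_JL t d) S
       = (\<integral>\<^sup>+G. ennreal (exp (\<theta> * t * a / 2)) * indicator S G \<partial>gauss_JL t d)"
    by (simp add: nn_integral_cmult_indicator Sm)
  also have "\<dots> \<le> (\<integral>\<^sup>+G. ennreal (exp (c * Q G)) \<partial>gauss_JL t d)"
  proof (intro nn_integral_mono)
    fix G assume "G \<in> space (gauss_JL t d)"
    show "ennreal (exp (\<theta> * t * a / 2)) * indicator S G \<le> ennreal (exp (c * Q G))"
    proof (cases "G \<in> S")
      case True
      then show ?thesis using key[OF True] by (simp add: indicator_def)
    qed (simp add: indicator_def)
  qed
  also have "\<dots> = ennreal ((1 / sqrt (1 - \<theta>)) ^ t)"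
    using mgf_Q[OF t s2 th] by (simp add: c_def s_def Q_def)
  finally have "ennreal (exp (\<theta> * t * a / 2) * measure (gauss_JL t d) S) \<le> ennreal ((1 / sqrt (1 - \<theta>)) ^ t)"
    by (simp add: emeasure_eq_measure ennreal_mult'')
  then have le: "exp (\<theta> * t * a / 2) * measure (gauss_JL t d) S \<le> (1 / sqrt (1 - \<theta>)) ^ t"
    using th by (subst (asm) ennreal_le_iff) auto
  have "exp (ln a / 2) * exp (ln a / 2) = exp (ln a / 2 + ln a / 2)" by (rule exp_add[symmetric])
  also have "\<dots> = a" using a by simp
  finally have "sqrt a = exp (ln a / 2)" by (intro real_sqrt_unique) (simp_all add: power2_eq_square)
  moreover have "1 / sqrt (1 - \<theta>) = sqrt a"
    using a by (simp add: \<theta>_def real_sqrt_divide)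
  ultimately have "1 / sqrt (1 - \<theta>) = exp (ln a / 2)" by simp
  then have "(1 / sqrt (1 - \<theta>)) ^ t = exp (t * (ln a / 2))" by (simp only: exp_of_nat_mult)
  with le have "measure (gauss_JL t d) S \<le> exp (t * (ln a / 2)) / exp (\<theta> * t * a / 2)"
    by (simp add: field_simps)
  also have "\<dots> = exp (t * (ln a / 2) - \<theta> * t * a / 2)" by (simp add: exp_diff)
  also have "\<theta> * t * a / 2 = (\<theta> * a) * t / 2" by simp
  also have "t * (ln a / 2) - (\<theta> * a) * t / 2 = - (t/2) * (a - 1 - ln a)"
    unfolding thA by (simp add: field_simps)
  finally show ?thesis by (simp add: S_def Q_def s_def \<theta>_def)
qed

lemma edist_mat:
  "edist t (mat_apply t d G x) (mat_apply t d G y) = sqrt (\<Sum>i<t. (\<Sum>j<d. G (i,j) * (x j - y j))\<^sup>2)"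
  unfolding edist_def enorm_def mat_apply_def
  by (intro arg_cong[where f=sqrt] sum.cong) (auto simp: sum_subtractf right_diff_distrib)

lemma edist_sq: "(edist d x y)\<^sup>2 = (\<Sum>j<d. (x j - y j)\<^sup>2)"
  unfolding edist_def enorm_def by (simp add: sum_nonneg)

lemma edist_nonneg: "0 \<le> edist d x y"
  unfolding edist_def enorm_def by (simp add: sum_nonneg)

lemma edist_zero_mat:
  assumes "(\<Sum>j<d. (x j - y j)\<^sup>2) = 0"
  shows "edist t (mat_apply t d G x) (mat_apply t d G y) = 0"
proof -
  have "\<forall>j\<in>{..<d}. (x j - y j)\<^sup>2 = 0" using assms by (subst (asm) sum_nonneg_eq_0_iff) auto
  then have "\<And>j. j < d \<Longrightarrow> x j - y j = 0" by auto
  then show ?thesis unfolding edist_mat by simp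
qed

lemma tail_upper:
  assumes t: "0 < t" and u: "0 < u"
  shows "measure (gauss_JL t d) {G \<in> space (gauss_JL t d).
      (1 + u) * edist d x y < edist t (mat_apply t d G x) (mat_apply t d G y)} \<le> exp (- (t * u\<^sup>2 / 2))"
proof (cases "(\<Sum>j<d. (x j - y j)\<^sup>2) = 0")
  case True
  then have E: "{G \<in> space (gauss_JL t d).
      (1 + u) * edist d x y < edist t (mat_apply t d G x) (mat_apply t d G y)} = {}"
    using edist_zero_mat[OF True] u edist_nonneg[of d x y] by (auto simp: not_less intro: mult_nonneg_nonneg)
  show ?thesis unfolding E by simp
next
  case False
  interpret prob_space "gauss_JL t d" by (rule prob_gauss[OF t])
  define v where "v j = x j - y j" for j
  define s where "s = (\<Sum>j<d. (v j)\<^sup>2)"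
  define Q where "Q G = (\<Sum>i<t. (\<Sum>j<d. G (i,j) * v j)\<^sup>2)" for G
  define a where "a = (1 + u)\<^sup>2"
  have s: "0 < s" using False by (simp add: s_def v_def sum_nonneg order_le_neq_trans)
  have "(1 + u) * 1 \<le> (1 + u) * (1 + u)" by (rule mult_left_mono) (use u in auto)
  then have "1 + u \<le> (1 + u) * (1 + u)" by simp
  then have a1: "1 < a" using u unfolding a_def power2_eq_square by linarith
  have th: "0 < 1 - 1/a" using a1 by simp
  note meas_Q[where t=t and d=d and v=v, measurable]
  have sub: "{G \<in> space (gauss_JL t d).
      (1 + u) * edist d x y < edist t (mat_apply t d G x) (mat_apply t d G y)}
     \<subseteq> {G \<in> space (gauss_JL t d). (1 - 1/a) * a * s \<le> (1 - 1/a) * Q G}"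
  proof safe
    fix G assume G: "G \<in> space (gauss_JL t d)"
      and lt: "(1 + u) * edist d x y < edist t (mat_apply t d G x) (mat_apply t d G y)"
    have e1: "edist d x y = sqrt s" unfolding edist_def enorm_def s_def v_def ..
    have e2: "edist t (mat_apply t d G x) (mat_apply t d G y) = sqrt (Q G)"
      unfolding edist_mat Q_def v_def ..
    have Q0: "0 \<le> Q G" by (simp add: Q_def sum_nonneg)
    have "((1 + u) * sqrt s)\<^sup>2 < (sqrt (Q G))\<^sup>2"
      using lt u s unfolding e1 e2 by (intro power_strict_mono) auto
    then have "a * s < Q G" using s Q0 by (simp add: a_def power_mult_distrib)
    then show "(1 - 1/a) * a * s \<le> (1 - 1/a) * Q G"
      using th by (simp add: mult.assoc mult_left_mono)
  qed
  have "measure (gauss_JL t d) {G \<in> space (gauss_JL t d).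
      (1 + u) * edist d x y < edist t (mat_apply t d G x) (mat_apply t d G y)}
      \<le> measure (gauss_JL t d) {G \<in> space (gauss_JL t d). (1 - 1/a) * a * s \<le> (1 - 1/a) * Q G}"
    by (rule finite_measure_mono[OF sub]) (unfold Q_def, measurable)
  also have "\<dots> \<le> exp (- (t/2) * (a - 1 - ln a))"
    using tail_Q[OF t s[unfolded s_def], of a] a1 by (simp add: Q_def s_def)
  also have "\<dots> \<le> exp (- (t * u\<^sup>2 / 2))"
  proof -
    have "ln (1 + u) \<le> u" using ln_le_minus_one[of "1 + u"] u by simp
    moreover have "ln a = 2 * ln (1 + u)" using u by (simp add: a_def ln_mult power2_eq_square)
    ultimately have "u\<^sup>2 \<le> a - 1 - ln a" by (simp add: a_def power2_eq_square algebra_simps)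
    then have "t * u\<^sup>2 \<le> t * (a - 1 - ln a)" by (intro mult_left_mono) auto
    then show ?thesis by simp
  qed
  finally show ?thesis .
qed

lemma tail_lower:
  assumes t: "0 < t" and u: "0 < u" "u < 1"
  shows "measure (gauss_JL t d) {G \<in> space (gauss_JL t d).
      edist t (mat_apply t d G x) (mat_apply t d G y) < (1 - u) * edist d x y} \<le> exp (- (t * u\<^sup>2 / 2))"
proof (cases "(\<Sum>j<d. (x j - y j)\<^sup>2) = 0")
  case True
  have "edist d x y = 0" unfolding edist_def enorm_def using True by simp
  then have E: "{G \<in> space (gauss_JL t d).
      edist t (mat_apply t d G x) (mat_apply t d G y) < (1 - u) * edist d x y} = {}"
    using edist_zero_mat[OF True] by auto
  show ?thesis unfolding E by simp
next
  case False
  interpret prob_space "gauss_JL t d" by (rule prob_gauss[OF t])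
  define v where "v j = x j - y j" for j
  define s where "s = (\<Sum>j<d. (v j)\<^sup>2)"
  define Q where "Q G = (\<Sum>i<t. (\<Sum>j<d. G (i,j) * v j)\<^sup>2)" for G
  define a where "a = (1 - u)\<^sup>2"
  have s: "0 < s" using False by (simp add: s_def v_def sum_nonneg order_le_neq_trans)
  have a0: "0 < a" using u by (simp add: a_def)
  have "(1 - u) * (1 - u) \<le> (1 - u) * 1" by (rule mult_left_mono) (use u in auto)
  then have "(1 - u) * (1 - u) \<le> 1 - u" by simp
  then have a1: "a < 1" using u unfolding a_def power2_eq_square by linarith
  have th: "1 - 1/a < 0" using a0 a1 by (simp add: field_simps)
  note meas_Q[where t=t and d=d and v=v, measurable]
  have sub: "{G \<in> space (gauss_JL t d).
      edist t (mat_apply t d G x) (mat_apply t d G y) < (1 - u) * edist d x y}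
     \<subseteq> {G \<in> space (gauss_JL t d). (1 - 1/a) * a * s \<le> (1 - 1/a) * Q G}"
  proof safe
    fix G assume G: "G \<in> space (gauss_JL t d)"
      and lt: "edist t (mat_apply t d G x) (mat_apply t d G y) < (1 - u) * edist d x y"
    have e1: "edist d x y = sqrt s" unfolding edist_def enorm_def s_def v_def ..
    have e2: "edist t (mat_apply t d G x) (mat_apply t d G y) = sqrt (Q G)"
      unfolding edist_mat Q_def v_def ..
    have Q0: "0 \<le> Q G" by (simp add: Q_def sum_nonneg)
    have "(sqrt (Q G))\<^sup>2 < ((1 - u) * sqrt s)\<^sup>2"
      using lt u s Q0 unfolding e1 e2 by (intro power_strict_mono) auto
    then have "Q G < a * s" using s Q0 by (simp add: a_def power_mult_distrib)
    then show "(1 - 1/a) * a * s \<le> (1 - 1/a) * Q G"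
      using th by (simp add: mult.assoc mult_left_mono_neg)
  qed
  have "measure (gauss_JL t d) {G \<in> space (gauss_JL t d).
      edist t (mat_apply t d G x) (mat_apply t d G y) < (1 - u) * edist d x y}
      \<le> measure (gauss_JL t d) {G \<in> space (gauss_JL t d). (1 - 1/a) * a * s \<le> (1 - 1/a) * Q G}"
    by (rule finite_measure_mono[OF sub]) (unfold Q_def, measurable)
  also have "\<dots> \<le> exp (- (t/2) * (a - 1 - ln a))"
    using tail_Q[OF t s[unfolded s_def], of a] a0 a1 by (simp add: Q_def s_def)
  also have "\<dots> \<le> exp (- (t * u\<^sup>2 / 2))"
  proof -
    have "ln (1 - u) \<le> - u" using ln_le_minus_one[of "1 - u"] u by simp
    moreover have "ln a = 2 * ln (1 - u)" using u by (simp add: a_def ln_mult power2_eq_square)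
    ultimately have "u\<^sup>2 \<le> a - 1 - ln a" by (simp add: a_def power2_eq_square algebra_simps)
    then have "t * u\<^sup>2 \<le> t * (a - 1 - ln a)" by (intro mult_left_mono) auto
    then show ?thesis by simp
  qed
  finally show ?thesis .
qed

lemma edist_L2: "edist n x y = L2_set (\<lambda>i. x i - y i) {..<n}"
  unfolding edist_def enorm_def L2_set_def ..

lemma edist_commute: "edist n x y = edist n y x"
  unfolding edist_def enorm_def by (simp add: power2_commute)

lemma edist_self[simp]: "edist n x x = 0"
  unfolding edist_def enorm_def by simp

lemma edist_ge0: "0 \<le> edist n x y"
  unfolding edist_def enorm_def by (simp add: sum_nonneg)

lemma edist_triangle: "edist n x z \<le> edist n x y + edist n y z"
proof -
  have "edist n x z = L2_set (\<lambda>i. (x i - y i) + (y i - z i)) {..<n}"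
    unfolding edist_L2 by simp
  also have "\<dots> \<le> L2_set (\<lambda>i. x i - y i) {..<n} + L2_set (\<lambda>i. y i - z i) {..<n}"
    by (rule L2_set_triangle_ineq)
  finally show ?thesis unfolding edist_L2 .
qed

lemma doubling_exact:
  assumes fin: "finite P" and ne: "P \<noteq> {}" and sub: "P \<subseteq> Rd d" and dd: "ddim d P = real lam"
    and c: "c \<in> Rd d" and r: "0 < r"
  shows "\<exists>Cs. finite Cs \<and> Cs \<subseteq> Rd d \<and> card Cs \<le> 2 ^ lam \<and>
           P \<inter> ecball d c r \<subseteq> (\<Union>s\<in>Cs. ecball d s (r/2))"
proof -
  define A where "A = {l. doubling_ok d P l}"
  have "doubling_ok d P (real (card P))"
    unfolding doubling_ok_def
  proof (intro ballI allI impI)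
    fix c' r' assume "c' \<in> Rd d" "(0::real) < r'"
    show "\<exists>Cs. finite Cs \<and> Cs \<subseteq> Rd d \<and> real (card Cs) \<le> 2 powr real (card P) \<and>
              P \<inter> ecball d c' r' \<subseteq> (\<Union>s\<in>Cs. ecball d s (r' / 2))"
    proof (intro exI conjI)
      show "finite P" by fact
      show "P \<subseteq> Rd d" by fact
      have "real (card P) < 2 ^ card P" by (rule of_nat_less_two_power)
      then show "real (card P) \<le> 2 powr real (card P)" by (simp add: powr_realpow)
      show "P \<inter> ecball d c' r' \<subseteq> (\<Union>s\<in>P. ecball d s (r' / 2))"
        using \<open>0 < r'\<close> sub by (auto simp: ecball_def)
    qed
  qed
  then have Ane: "A \<noteq> {}" by (auto simp: A_def)
  define z where "z = real lam + log 2 (1 + 1 / 2 ^ lam)"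
  have h1: "1 < 1 + 1 / (2::real) ^ lam" by simp
  have "0 < log 2 (1 + 1 / 2 ^ lam)"
    by (subst zero_less_log_cancel_iff) (use h1 in linarith)+
  then have "Inf A < z" using dd by (simp add: A_def ddim_def z_def)
  then obtain l where lA: "l \<in> A" and lz: "l < z" using cInf_lessD[OF Ane] by auto
  have p1: "2 powr (log 2 (1 + 1 / 2 ^ lam)) = 1 + 1 / (2::real) ^ lam"
    by (rule powr_log_cancel) (use h1 in linarith)+
  have p2: "2 powr real lam = (2::real) ^ lam" by (simp add: powr_realpow)
  have "2 powr z = 2 powr real lam * 2 powr (log 2 (1 + 1 / 2 ^ lam))"
    unfolding z_def by (rule powr_add)
  also have "\<dots> = 2 ^ lam * (1 + 1 / 2 ^ lam)" unfolding p1 p2 ..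
  also have "\<dots> = 2 ^ lam + 1" by (simp add: field_simps)
  finally have "2 powr z = 2 ^ lam + 1" .
  moreover have "2 powr l < 2 powr z" by (rule powr_less_mono) (use lz in auto)
  ultimately have lt: "2 powr l < 2 ^ lam + 1" by simp
  obtain Cs where Cs: "finite Cs" "Cs \<subseteq> Rd d" "real (card Cs) \<le> 2 powr l"
      "P \<inter> ecball d c r \<subseteq> (\<Union>s\<in>Cs. ecball d s (r/2))"
    using lA c r unfolding A_def doubling_ok_def by blast
  have "real (card Cs) < real (2 ^ lam + 1)" using Cs(3) lt by simp
  then have "card Cs \<le> 2 ^ lam" by linarith
  then show ?thesis using Cs by blast
qed

lemma KC_cover:
  assumes fin: "finite P" and ne: "P \<noteq> {}" and k: "1 \<le> k"
  shows "\<exists>S. S \<subseteq> P \<and> S \<noteq> {} \<and> card S \<le> k \<and> (\<forall>x\<in>P. \<exists>s\<in>S. edist d x s \<le> KC d k P)"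
proof -
  define F where "F = {S. S \<subseteq> P \<and> S \<noteq> {} \<and> card S \<le> k}"
  define f where "f S = Max ((\<lambda>x. Min ((\<lambda>s. edist d x s) ` S)) ` P)" for S
  have finF: "finite F" using fin by (auto simp: F_def intro: finite_subset[of _ "Pow P"])
  obtain p where p: "p \<in> P" using ne by auto
  have "{p} \<in> F" using p k by (auto simp: F_def)
  then have Fne: "F \<noteq> {}" by auto
  have "KC d k P = Min (f ` F)" unfolding KC_def f_def F_def ..
  moreover have "Min (f ` F) \<in> f ` F" using finF Fne by (intro Min_in) auto
  ultimately obtain S where SF: "S \<in> F" and KS: "KC d k P = f S" by auto
  have finS: "finite S" and Sne: "S \<noteq> {}" and SP: "S \<subseteq> P" using SF fin by (auto simp: F_def intro: finite_subset)
  have "\<exists>s\<in>S. edist d x s \<le> KC d k P" if x: "x \<in> P" for x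
  proof -
    have "Min ((\<lambda>s. edist d x s) ` S) \<in> (\<lambda>s. edist d x s) ` S" using finS Sne by (intro Min_in) auto
    then obtain s where s: "s \<in> S" "edist d x s = Min ((\<lambda>s. edist d x s) ` S)" by auto
    have "Min ((\<lambda>s. edist d x s) ` S) \<le> f S" unfolding f_def using fin x by (intro Max_ge) auto
    then have "edist d x s \<le> KC d k P" using s KS by simp
    then show ?thesis using s(1) by blast
  qed
  moreover have "S \<subseteq> P \<and> S \<noteq> {} \<and> card S \<le> k" using SF by (simp add: F_def)
  ultimately show ?thesis by (intro exI[of _ S]) blast
qed

lemma KC_nonneg:
  assumes fin: "finite P" and ne: "P \<noteq> {}" and k: "1 \<le> k"
  shows "0 \<le> KC d k P"
proof -
  obtain S where S: "S \<subseteq> P" "\<forall>x\<in>P. \<exists>s\<in>S. edist d x s \<le> KC d k P" using KC_cover[OF assms] by blast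
  obtain p where "p \<in> P" using ne by auto
  then obtain s where "edist d p s \<le> KC d k P" using S by auto
  then show ?thesis using edist_ge0[of d p s] by linarith
qed

definition dprop :: "nat \<Rightarrow> (nat \<Rightarrow> real) set \<Rightarrow> nat \<Rightarrow> bool" where
  "dprop d P lam \<longleftrightarrow> (\<forall>c\<in>Rd d. \<forall>r>0. \<exists>Cs. finite Cs \<and> Cs \<subseteq> Rd d \<and> card Cs \<le> 2 ^ lam \<and>
           P \<inter> ecball d c r \<subseteq> (\<Union>s\<in>Cs. ecball d s (r/2)))"

lemma dprop_exact:
  assumes "finite P" "P \<noteq> {}" "P \<subseteq> Rd d" "ddim d P = real lam"
  shows "dprop d P lam"
  unfolding dprop_def using doubling_exact[OF assms] by blast

lemma centers_exist:
  assumes fin: "finite P" and sub: "P \<subseteq> Rd d"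
    and D: "dprop d P lam"
    and S: "S \<subseteq> P" "card S \<le> k" "\<forall>x\<in>P. \<exists>s\<in>S. edist d x s \<le> R" and R: "0 < R"
  shows "\<exists>C. finite C \<and> C \<subseteq> Rd d \<and> card C \<le> k * 2 ^ (lam * m) \<and> (\<forall>x\<in>P. \<exists>c\<in>C. edist d c x \<le> R / 2 ^ m)"
proof (induction m)
  case 0
  show ?case
    using S fin sub by (intro exI[of _ S]) (auto intro: finite_subset simp: edist_commute)
next
  case (Suc m)
  then obtain C where C: "finite C" "C \<subseteq> Rd d" "card C \<le> k * 2 ^ (lam * m)"
    "\<forall>x\<in>P. \<exists>c\<in>C. edist d c x \<le> R / 2 ^ m" by blast
  have "\<forall>c\<in>C. \<exists>Cs. finite Cs \<and> Cs \<subseteq> Rd d \<and> card Cs \<le> 2 ^ lam \<and>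
           P \<inter> ecball d c (R / 2 ^ m) \<subseteq> (\<Union>s\<in>Cs. ecball d s ((R / 2 ^ m)/2))"
  proof
    fix c assume "c \<in> C"
    then have cR: "c \<in> Rd d" using C(2) by blast
    have r0: "0 < R / 2 ^ m" using R by simp
    have "\<forall>r>0. \<exists>Cs. finite Cs \<and> Cs \<subseteq> Rd d \<and> card Cs \<le> 2 ^ lam \<and>
           P \<inter> ecball d c r \<subseteq> (\<Union>s\<in>Cs. ecball d s (r/2))"
      using D cR unfolding dprop_def by blast
    then show "\<exists>Cs. finite Cs \<and> Cs \<subseteq> Rd d \<and> card Cs \<le> 2 ^ lam \<and>
           P \<inter> ecball d c (R / 2 ^ m) \<subseteq> (\<Union>s\<in>Cs. ecball d s ((R / 2 ^ m)/2))"
      using r0 by blast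
  qed
  then have "\<exists>CS. \<forall>c\<in>C. finite (CS c) \<and> CS c \<subseteq> Rd d \<and> card (CS c) \<le> 2 ^ lam \<and>
           P \<inter> ecball d c (R / 2 ^ m) \<subseteq> (\<Union>s\<in>CS c. ecball d s ((R / 2 ^ m)/2))"
    by (rule bchoice)
  then obtain CS where CS': "\<forall>c\<in>C. finite (CS c) \<and> CS c \<subseteq> Rd d \<and> card (CS c) \<le> 2 ^ lam \<and>
           P \<inter> ecball d c (R / 2 ^ m) \<subseteq> (\<Union>s\<in>CS c. ecball d s ((R / 2 ^ m)/2))"
    by (elim exE)
  then have CS: "\<And>c. c \<in> C \<Longrightarrow> finite (CS c) \<and> CS c \<subseteq> Rd d \<and> card (CS c) \<le> 2 ^ lam \<and>
           P \<inter> ecball d c (R / 2 ^ m) \<subseteq> (\<Union>s\<in>CS c. ecball d s ((R / 2 ^ m)/2))"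
    by blast
  define C' where "C' = (\<Union>c\<in>C. CS c)"
  have "finite C'" using C(1) CS by (auto simp: C'_def)
  moreover have "C' \<subseteq> Rd d" using CS by (auto simp: C'_def)
  moreover have "card C' \<le> k * 2 ^ (lam * Suc m)"
  proof -
    have "card C' \<le> (\<Sum>c\<in>C. card (CS c))" unfolding C'_def by (rule card_UN_le) (rule C(1))
    also have "\<dots> \<le> (\<Sum>c\<in>C. 2 ^ lam)" using CS by (intro sum_mono) auto
    also have "\<dots> = card C * 2 ^ lam" by simp
    also have "\<dots> \<le> k * 2 ^ (lam * m) * 2 ^ lam" using C(3) by simp
    also have "\<dots> = k * 2 ^ (lam * Suc m)" by (simp add: power_add algebra_simps)
    finally show ?thesis .
  qed
  moreover have "\<forall>x\<in>P. \<exists>c\<in>C'. edist d c x \<le> R / 2 ^ Suc m"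
  proof
    fix x assume x: "x \<in> P"
    obtain c where c: "c \<in> C" "edist d c x \<le> R / 2 ^ m" using C(4) x by blast
    have "x \<in> P \<inter> ecball d c (R / 2 ^ m)" using x c sub by (auto simp: ecball_def)
    then obtain s where "s \<in> CS c" "x \<in> ecball d s ((R / 2 ^ m)/2)" using CS[OF c(1)] by blast
    then have "s \<in> C'" "edist d s x \<le> R / 2 ^ Suc m" using c(1) by (auto simp: C'_def ecball_def mult.commute)
    then show "\<exists>c\<in>C'. edist d c x \<le> R / 2 ^ Suc m" by blast
  qed
  ultimately show ?case by blast
qed

lemma nets_exist:
  assumes fin: "finite P" and sub: "P \<subseteq> Rd d"
    and D: "dprop d P lam"
    and S: "S \<subseteq> P" "card S \<le> k" "\<forall>x\<in>P. \<exists>s\<in>S. edist d x s \<le> R" and R: "0 < R"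
  shows "\<exists>N. N \<subseteq> P \<and> card N \<le> k * 2 ^ (lam * m) \<and> (\<forall>x\<in>P. \<exists>y\<in>N. edist d x y \<le> 2 * R / 2 ^ m)"
proof -
  obtain C where C: "finite C" "C \<subseteq> Rd d" "card C \<le> k * 2 ^ (lam * m)"
      "\<forall>x\<in>P. \<exists>c\<in>C. edist d c x \<le> R / 2 ^ m"
    using centers_exist[OF fin sub D S R, of m] by (elim exE conjE)
  define C0 where "C0 = {c\<in>C. \<exists>p\<in>P. edist d c p \<le> R / 2 ^ m}"
  have "\<forall>c\<in>C0. \<exists>p. p \<in> P \<and> edist d c p \<le> R / 2 ^ m" by (auto simp: C0_def)
  then have "\<exists>rep. \<forall>c\<in>C0. rep c \<in> P \<and> edist d c (rep c) \<le> R / 2 ^ m" by (rule bchoice)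
  then obtain rep where rep': "\<forall>c\<in>C0. rep c \<in> P \<and> edist d c (rep c) \<le> R / 2 ^ m" by (elim exE)
  then have rep: "\<And>c. c \<in> C0 \<Longrightarrow> rep c \<in> P \<and> edist d c (rep c) \<le> R / 2 ^ m" by blast
  define N where "N = rep ` C0"
  have "N \<subseteq> P" using rep by (auto simp: N_def)
  moreover have "card N \<le> k * 2 ^ (lam * m)"
  proof -
    have "card N \<le> card C0" unfolding N_def by (rule card_image_le) (use C(1) in \<open>auto simp: C0_def\<close>)
    also have "\<dots> \<le> card C" using C(1) by (intro card_mono) (auto simp: C0_def)
    finally show ?thesis using C(3) by linarith
  qed
  moreover have "\<forall>x\<in>P. \<exists>y\<in>N. edist d x y \<le> 2 * R / 2 ^ m"
  proof
    fix x assume x: "x \<in> P"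
    obtain c where c: "c \<in> C" "edist d c x \<le> R / 2 ^ m" using C(4) x by blast
    then have cC0: "c \<in> C0" using x by (auto simp: C0_def)
    have "edist d x (rep c) \<le> edist d x c + edist d c (rep c)" by (rule edist_triangle)
    also have "\<dots> \<le> R / 2 ^ m + R / 2 ^ m" using c rep[OF cC0] by (simp add: edist_commute add_mono)
    finally show "\<exists>y\<in>N. edist d x y \<le> 2 * R / 2 ^ m" using cC0 by (auto simp: N_def)
  qed
  ultimately show ?thesis by blast
qed

lemma edist_mat_zero:
  assumes "edist d x y = 0"
  shows "edist t (mat_apply t d G x) (mat_apply t d G y) = 0"
proof -
  have "(edist d x y)\<^sup>2 = 0" using assms by simp
  then have "(\<Sum>j<d. (x j - y j)\<^sup>2) = 0" unfolding edist_sq .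
  then show ?thesis by (rule edist_zero_mat)
qed

lemma sum_j2_closed: "(\<Sum>j<M. (real j + 2) / 2 ^ j) = 6 - (2 * real M + 6) / 2 ^ M"
proof (induction M)
  case 0 then show ?case by simp
next
  case (Suc M)
  have "(\<Sum>j<Suc M. (real j + 2) / 2 ^ j) = (\<Sum>j<M. (real j + 2) / 2 ^ j) + (real M + 2) / 2 ^ M" by simp
  also have "\<dots> = 6 - (2 * real M + 6) / 2 ^ M + (real M + 2) / 2 ^ M" using Suc.IH by simp
  also have "\<dots> = 6 - (2 * real (Suc M) + 6) / 2 ^ Suc M" by (simp add: field_simps)
  finally show ?case .
qed

lemma sum_j2_bound: "(\<Sum>j<M. (real j + 2) / 2 ^ j) \<le> 6"
  unfolding sum_j2_closed by (simp add: divide_nonneg_pos)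

lemma chain:
  assumes NP: "\<And>j. N j \<subseteq> P"
    and Ncov: "\<And>j. \<forall>x\<in>P. \<exists>y\<in>N j. edist d x y \<le> \<rho> / 2 ^ j"
    and deep: "\<And>x y. x \<in> P \<Longrightarrow> y \<in> P \<Longrightarrow> edist d x y \<le> \<rho> / 2 ^ M \<Longrightarrow> edist d x y = 0"
    and good: "\<And>j y y'. j < M \<Longrightarrow> y \<in> N j \<Longrightarrow> y' \<in> N (Suc j) \<Longrightarrow>
        edist t (mat_apply t d G y) (mat_apply t d G y') \<le> (real j + 2) * edist d y y'"
    and x: "x \<in> P" and rho: "0 \<le> \<rho>"
  shows "\<exists>a\<in>N 0. edist d x a \<le> \<rho> \<and> edist t (mat_apply t d G x) (mat_apply t d G a) \<le> 9 * \<rho>"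
proof -
  let ?E = "\<lambda>a b. edist t (mat_apply t d G a) (mat_apply t d G b)"
  have "\<forall>j. \<exists>y. y \<in> N j \<and> edist d x y \<le> \<rho> / 2 ^ j" using Ncov x by blast
  then obtain y where y: "\<And>j. y j \<in> N j \<and> edist d x (y j) \<le> \<rho> / 2 ^ j" by metis
  have link: "?E (y j) (y (Suc j)) \<le> (real j + 2) * (3 / 2 * \<rho> / 2 ^ j)" if j: "j < M" for j
  proof -
    have "edist d (y j) (y (Suc j)) \<le> edist d (y j) x + edist d x (y (Suc j))" by (rule edist_triangle)
    also have "\<dots> \<le> \<rho> / 2 ^ j + \<rho> / 2 ^ Suc j"
      using y[of j] y[of "Suc j"] by (simp add: edist_commute add_mono)
    also have "\<dots> = 3 / 2 * \<rho> / 2 ^ j" by (simp add: field_simps)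
    finally have "(real j + 2) * edist d (y j) (y (Suc j)) \<le> (real j + 2) * (3 / 2 * \<rho> / 2 ^ j)"
      by (intro mult_left_mono) auto
    then show ?thesis using good[OF j, of "y j" "y (Suc j)"] y by force
  qed
  have tele: "n \<le> M \<Longrightarrow> ?E (y 0) (y n) \<le> (\<Sum>j<n. (real j + 2) * (3 / 2 * \<rho> / 2 ^ j))" for n
  proof (induction n)
    case 0 then show ?case by simp
  next
    case (Suc n)
    have "?E (y 0) (y (Suc n)) \<le> ?E (y 0) (y n) + ?E (y n) (y (Suc n))" by (rule edist_triangle)
    also have "\<dots> \<le> (\<Sum>j<n. (real j + 2) * (3 / 2 * \<rho> / 2 ^ j)) + (real n + 2) * (3 / 2 * \<rho> / 2 ^ n)"
      using Suc link[of n] by (intro add_mono) auto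
    finally show ?case by simp
  qed
  have yM: "y M \<in> P" using y[of M] NP by blast
  have "edist d (y M) x = 0"
    using deep[OF yM x] y[of M] by (simp add: edist_commute)
  then have last: "?E (y M) x = 0" by (rule edist_mat_zero)
  have "?E x (y 0) = ?E (y 0) x" by (simp add: edist_commute)
  also have "\<dots> \<le> ?E (y 0) (y M) + ?E (y M) x" by (rule edist_triangle)
  also have "\<dots> \<le> (\<Sum>j<M. (real j + 2) * (3 / 2 * \<rho> / 2 ^ j))" using tele[of M] last by simp
  also have "\<dots> = 3 / 2 * \<rho> * (\<Sum>j<M. (real j + 2) / 2 ^ j)"
    by (simp add: sum_distrib_left field_simps)
  also have "\<dots> \<le> 3 / 2 * \<rho> * 6" using rho sum_j2_bound[of M] by (intro mult_left_mono) auto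
  finally have "?E x (y 0) \<le> 9 * \<rho>" by simp
  then show ?thesis using y[of 0] by auto
qed

lemma pair_bound:
  fixes \<epsilon> \<rho> R :: real
  assumes eps: "0 < \<epsilon>" "\<epsilon> < 1" and rho: "0 \<le> \<rho>" and rhoR: "22 * \<rho> \<le> \<epsilon> * R"
    and a1: "edist d x1 a1 \<le> \<rho>" "edist t (mat_apply t d G x1) (mat_apply t d G a1) \<le> 9 * \<rho>"
    and a2: "edist d x2 a2 \<le> \<rho>" "edist t (mat_apply t d G x2) (mat_apply t d G a2) \<le> 9 * \<rho>"
    and top: "(1 - \<epsilon>) * edist d a1 a2 \<le> edist t (mat_apply t d G a1) (mat_apply t d G a2)"
      "edist t (mat_apply t d G a1) (mat_apply t d G a2) \<le> (1 + \<epsilon>) * edist d a1 a2"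
  shows "(1 - \<epsilon>) * edist d x1 x2 - \<epsilon> * R \<le> edist t (mat_apply t d G x1) (mat_apply t d G x2) \<and>
         edist t (mat_apply t d G x1) (mat_apply t d G x2) \<le> (1 + \<epsilon>) * edist d x1 x2 + \<epsilon> * R"
proof -
  let ?G = "mat_apply t d G"
  define D where "D = edist d x1 x2"
  define Da where "Da = edist d a1 a2"
  define E where "E = edist t (?G x1) (?G x2)"
  define Ea where "Ea = edist t (?G a1) (?G a2)"
  have "edist d a1 a2 \<le> edist d a1 x1 + edist d x1 a2" by (rule edist_triangle)
  moreover have "edist d x1 a2 \<le> edist d x1 x2 + edist d x2 a2" by (rule edist_triangle)
  ultimately have d1: "Da \<le> D + 2 * \<rho>" using a1 a2 unfolding D_def Da_def by (simp add: edist_commute)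
  have "edist d x1 x2 \<le> edist d x1 a1 + edist d a1 x2" by (rule edist_triangle)
  moreover have "edist d a1 x2 \<le> edist d a1 a2 + edist d a2 x2" by (rule edist_triangle)
  ultimately have d2: "D \<le> Da + 2 * \<rho>" using a1 a2 unfolding D_def Da_def by (simp add: edist_commute)
  have "edist t (?G x1) (?G x2) \<le> edist t (?G x1) (?G a1) + edist t (?G a1) (?G x2)" by (rule edist_triangle)
  moreover have "edist t (?G a1) (?G x2) \<le> edist t (?G a1) (?G a2) + edist t (?G a2) (?G x2)" by (rule edist_triangle)
  ultimately have e1: "E \<le> Ea + 18 * \<rho>" using a1 a2 unfolding E_def Ea_def by (simp add: edist_commute)
  have "edist t (?G a1) (?G a2) \<le> edist t (?G a1) (?G x1) + edist t (?G x1) (?G a2)" by (rule edist_triangle)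
  moreover have "edist t (?G x1) (?G a2) \<le> edist t (?G x1) (?G x2) + edist t (?G x2) (?G a2)" by (rule edist_triangle)
  ultimately have e2: "Ea \<le> E + 18 * \<rho>" using a1 a2 unfolding E_def Ea_def by (simp add: edist_commute)
  have m1: "(1 + \<epsilon>) * Da \<le> (1 + \<epsilon>) * (D + 2 * \<rho>)" using d1 eps by (intro mult_left_mono) auto
  have m2: "(1 - \<epsilon>) * (D - 2 * \<rho>) \<le> (1 - \<epsilon>) * Da" using d2 eps by (intro mult_left_mono) auto
  have "E \<le> (1 + \<epsilon>) * D + \<epsilon> * R"
  proof -
    have "E \<le> (1 + \<epsilon>) * Da + 18 * \<rho>" using e1 top(2) unfolding Ea_def Da_def by linarith
    also have "\<dots> \<le> (1 + \<epsilon>) * (D + 2 * \<rho>) + 18 * \<rho>" using m1 by linarith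
    also have "\<dots> = (1 + \<epsilon>) * D + 2 * \<rho> + 2 * \<epsilon> * \<rho> + 18 * \<rho>" by (simp add: algebra_simps)
    also have "\<dots> \<le> (1 + \<epsilon>) * D + 22 * \<rho>" using eps rho by (simp add: mult_left_le_one_le mult_le_cancel_right1)
    finally show ?thesis using rhoR by linarith
  qed
  moreover have "(1 - \<epsilon>) * D - \<epsilon> * R \<le> E"
  proof -
    have "(1 - \<epsilon>) * D - 2 * \<rho> + 2 * \<epsilon> * \<rho> = (1 - \<epsilon>) * (D - 2 * \<rho>)" by (simp add: algebra_simps)
    also have "\<dots> \<le> (1 - \<epsilon>) * Da" by (rule m2)
    also have "\<dots> \<le> Ea" using top(1) unfolding Ea_def Da_def .
    also have "\<dots> \<le> E + 18 * \<rho>" by (rule e2)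
    finally have "(1 - \<epsilon>) * D - 20 * \<rho> \<le> E" using eps rho
      by (smt (verit) mult_nonneg_nonneg)
    then show ?thesis using rhoR rho by linarith
  qed
  ultimately show ?thesis unfolding D_def E_def by simp
qed

lemma exp_nat_ln2: "exp (- (real n * ln 2)) = 1 / 2 ^ n"
proof -
  have "exp (real n * ln 2) = exp (ln 2) ^ n" by (rule exp_of_nat_mult)
  then have "exp (real n * ln 2) = 2 ^ n" by simp
  then show ?thesis by (simp add: exp_minus field_simps)
qed

lemma exp_le_pow2:
  assumes L: "ln 2 \<le> L" and c: "real n \<le> c"
  shows "exp (- (c * L)) \<le> 1 / 2 ^ n"
proof -
  have L0: "0 \<le> L" using L ln_ge_zero[of 2] by linarith
  have "real n * ln 2 \<le> real n * L" using L by (intro mult_left_mono) auto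
  also have "\<dots> \<le> c * L" using c L0 by (intro mult_right_mono) auto
  finally have "exp (- (c * L)) \<le> exp (- (real n * ln 2))" by simp
  then show ?thesis by (simp add: exp_nat_ln2)
qed

lemma geom_sum4: "(\<Sum>j<M. 1 / (2::real) ^ (j + 4)) \<le> 1 / 8"
proof -
  have "(\<Sum>j<M. 1 / (2::real) ^ (j + 4)) = (1 - 1 / 2 ^ M) / 8"
  proof (induction M)
    case 0 then show ?case by simp
  next
    case (Suc M)
    have "(\<Sum>j<Suc M. 1 / (2::real) ^ (j + 4)) = (\<Sum>j<M. 1 / (2::real) ^ (j + 4)) + 1 / 2 ^ (M + 4)" by simp
    also have "\<dots> = (1 - 1 / 2 ^ M) / 8 + 1 / (2 ^ M * 16)" using Suc.IH by (simp add: power_add)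
    also have "\<dots> = (1 - 1 / 2 ^ Suc M) / 8" by (simp add: field_simps)
    finally show ?case .
  qed
  then show ?thesis by simp
qed

lemma core:
  fixes \<epsilon> \<rho> R L :: real and N :: "nat \<Rightarrow> (nat \<Rightarrow> real) set"
  assumes t: "0 < t" and eps: "0 < \<epsilon>" "\<epsilon> < 1" and finP: "finite P"
    and NP: "\<And>j. N j \<subseteq> P"
    and Ncard: "\<And>j. real (card (N j)) \<le> exp ((real j + 7) * L)"
    and Ncov: "\<And>j. \<forall>x\<in>P. \<exists>y\<in>N j. edist d x y \<le> \<rho> / 2 ^ j"
    and deep: "\<And>x y. x \<in> P \<Longrightarrow> y \<in> P \<Longrightarrow> edist d x y \<le> \<rho> / 2 ^ M \<Longrightarrow> edist d x y = 0"
    and rho: "0 \<le> \<rho>" and rhoR: "22 * \<rho> \<le> \<epsilon> * R"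
    and L: "ln 2 \<le> L" and tL: "64 * L \<le> t * \<epsilon>\<^sup>2"
  shows "2 / 3 \<le> measure (gauss_JL t d) {G \<in> space (gauss_JL t d). \<forall>x1\<in>P. \<forall>x2\<in>P.
            (1 - \<epsilon>) * edist d x1 x2 - \<epsilon> * R
              \<le> edist t (mat_apply t d G x1) (mat_apply t d G x2) \<and>
            edist t (mat_apply t d G x1) (mat_apply t d G x2)
              \<le> (1 + \<epsilon>) * edist d x1 x2 + \<epsilon> * R}"
proof -
  interpret prob_space "gauss_JL t d" by (rule prob_gauss[OF t])
  let ?M = "gauss_JL t d"
  let ?E = "\<lambda>a b G. edist t (mat_apply t d G a) (mat_apply t d G b)"
  have finN: "finite (N j)" for j using NP finP by (rule finite_subset)
  have L0: "0 < L" using L ln_gt_zero[of 2] by linarith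
  have tL2: "64 * L \<le> t"
  proof -
    have "\<epsilon>\<^sup>2 \<le> 1" using eps by (simp add: power_le_one)
    then have "t * \<epsilon>\<^sup>2 \<le> t" using t by (simp add: mult_left_le)
    then show ?thesis using tL by linarith
  qed
  define Bt where "Bt = (\<lambda>(a, b). {G \<in> space ?M. (1 + \<epsilon>) * edist d a b < ?E a b G} \<union>
                                   {G \<in> space ?M. ?E a b G < (1 - \<epsilon>) * edist d a b})"
  define Bl where "Bl = (\<lambda>(j, y, y'). {G \<in> space ?M. (1 + (real j + 1)) * edist d y y' < ?E y y' G})"
  define I1 where "I1 = N 0 \<times> N 0"
  define I2 where "I2 = Sigma {..<M} (\<lambda>j. N j \<times> N (Suc j))"
  define B where "B = (\<Union>i\<in>I1. Bt i) \<union> (\<Union>i\<in>I2. Bl i)"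
  have finI1: "finite I1" using finN by (simp add: I1_def)
  have finI2: "finite I2" using finN by (simp add: I2_def)
  have Bt_sets: "Bt i \<in> sets ?M" for i
    unfolding Bt_def by (cases i) (simp, measurable)
  have Bl_sets: "Bl i \<in> sets ?M" for i
    unfolding Bl_def by (cases i) (simp, measurable)
  have U1: "(\<Union>i\<in>I1. Bt i) \<in> sets ?M" using finI1 Bt_sets by auto
  have U2: "(\<Union>i\<in>I2. Bl i) \<in> sets ?M" using finI2 Bl_sets by auto
  have Bsets: "B \<in> sets ?M" unfolding B_def using U1 U2 by auto
  have Bt_bound: "measure ?M (Bt i) \<le> 2 * exp (- (t * \<epsilon>\<^sup>2 / 2))" for i
  proof (cases i)
    case (Pair a b)
    have "measure ?M (Bt i) \<le> measure ?M {G \<in> space ?M. (1 + \<epsilon>) * edist d a b < ?E a b G}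
          + measure ?M {G \<in> space ?M. ?E a b G < (1 - \<epsilon>) * edist d a b}"
      unfolding Bt_def Pair by (simp, intro measure_Un_le) measurable
    also have "\<dots> \<le> exp (- (t * \<epsilon>\<^sup>2 / 2)) + exp (- (t * \<epsilon>\<^sup>2 / 2))"
      by (intro add_mono tail_upper tail_lower t eps)
    finally show ?thesis by simp
  qed
  have m1: "measure ?M (\<Union>i\<in>I1. Bt i) \<le> 2 / 2 ^ 18"
  proof -
    have "measure ?M (\<Union>i\<in>I1. Bt i) \<le> (\<Sum>i\<in>I1. measure ?M (Bt i))"
      using finI1 Bt_sets by (intro finite_measure_subadditive_finite) auto
    also have "\<dots> \<le> (\<Sum>i\<in>I1. 2 * exp (- (t * \<epsilon>\<^sup>2 / 2)))" by (intro sum_mono Bt_bound)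
    also have "\<dots> = real (card (N 0)) * real (card (N 0)) * (2 * exp (- (t * \<epsilon>\<^sup>2 / 2)))"
      by (simp add: I1_def card_cartesian_product)
    also have "\<dots> \<le> exp (7 * L) * exp (7 * L) * (2 * exp (- (32 * L)))"
    proof -
      have c0: "real (card (N 0)) \<le> exp (7 * L)" using Ncard[of 0] by simp
      have "exp (- (t * \<epsilon>\<^sup>2 / 2)) \<le> exp (- (32 * L))" using tL by simp
      then show ?thesis using c0 by (intro mult_mono) auto
    qed
    also have "\<dots> = 2 * exp (- (18 * L))" by (simp add: exp_add[symmetric] exp_minus field_simps)
    also have "\<dots> \<le> 2 * (1 / 2 ^ 18)" using exp_le_pow2[OF L, of 18 18] by simp
    finally show ?thesis by simp
  qed
  have Bl_bound: "measure ?M (Bl (j, y, y')) \<le> exp (- (t * (real j + 1)\<^sup>2 / 2))" for j y y'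
    unfolding Bl_def using tail_upper[OF t, of "real j + 1" d y y'] by simp
  have m2: "measure ?M (\<Union>i\<in>I2. Bl i) \<le> 1 / 8"
  proof -
    have "measure ?M (\<Union>i\<in>I2. Bl i) \<le> (\<Sum>i\<in>I2. measure ?M (Bl i))"
      using finI2 Bl_sets by (intro finite_measure_subadditive_finite) auto
    also have "\<dots> = (\<Sum>j<M. \<Sum>p\<in>N j \<times> N (Suc j). measure ?M (Bl (j, p)))"
      unfolding I2_def by (subst sum.Sigma) (auto simp: finN)
    also have "\<dots> \<le> (\<Sum>j<M. \<Sum>p\<in>N j \<times> N (Suc j). exp (- (t * (real j + 1)\<^sup>2 / 2)))"
      by (intro sum_mono) (auto intro: Bl_bound)
    also have "\<dots> = (\<Sum>j<M. real (card (N j)) * real (card (N (Suc j))) * exp (- (t * (real j + 1)\<^sup>2 / 2)))"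
      by (simp add: card_cartesian_product)
    also have "\<dots> \<le> (\<Sum>j<M. 1 / 2 ^ (j + 4))"
    proof (intro sum_mono)
      fix j assume "j \<in> {..<M}"
      have c1: "real (card (N j)) \<le> exp ((real j + 7) * L)" by (rule Ncard)
      have c2: "real (card (N (Suc j))) \<le> exp ((real j + 8) * L)" using Ncard[of "Suc j"] by (simp add: add.commute)
      have "32 * (real j + 1)\<^sup>2 * L \<le> t * (real j + 1)\<^sup>2 / 2"
        using tL2 by (simp add: field_simps mult_right_mono)
      then have c3: "exp (- (t * (real j + 1)\<^sup>2 / 2)) \<le> exp (- (32 * (real j + 1)\<^sup>2 * L))" by simp
      have "real (card (N j)) * real (card (N (Suc j))) * exp (- (t * (real j + 1)\<^sup>2 / 2))
          \<le> exp ((real j + 7) * L) * exp ((real j + 8) * L) * exp (- (32 * (real j + 1)\<^sup>2 * L))"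
        using c1 c2 c3 by (intro mult_mono) auto
      also have "\<dots> = exp (- ((32 * (real j + 1)\<^sup>2 - 2 * real j - 15) * L))"
        by (simp add: exp_add[symmetric] algebra_simps)
      also have "\<dots> \<le> 1 / 2 ^ (j + 4)"
      proof (rule exp_le_pow2[OF L])
        have "(real j + 1) * 1 \<le> (real j + 1) * (real j + 1)" by (intro mult_left_mono) auto
        then have "32 * (real j + 1) \<le> 32 * (real j + 1)\<^sup>2" unfolding power2_eq_square by linarith
        then show "real (j + 4) \<le> 32 * (real j + 1)\<^sup>2 - 2 * real j - 15" by simp
      qed
      finally show "real (card (N j)) * real (card (N (Suc j))) * exp (- (t * (real j + 1)\<^sup>2 / 2))
          \<le> 1 / 2 ^ (j + 4)" .
    qed
    also have "\<dots> \<le> 1 / 8" by (rule geom_sum4)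
    finally show ?thesis .
  qed
  have mB: "measure ?M B \<le> 1 / 3"
  proof -
    have "measure ?M B \<le> measure ?M (\<Union>i\<in>I1. Bt i) + measure ?M (\<Union>i\<in>I2. Bl i)"
      unfolding B_def using U1 U2 by (rule measure_Un_le)
    also have "\<dots> \<le> 2 / 2 ^ 18 + 1 / 8" using m1 m2 by (rule add_mono)
    finally show ?thesis by simp
  qed
  define Good where "Good = {G \<in> space ?M. \<forall>x1\<in>P. \<forall>x2\<in>P.
            (1 - \<epsilon>) * edist d x1 x2 - \<epsilon> * R \<le> ?E x1 x2 G \<and> ?E x1 x2 G \<le> (1 + \<epsilon>) * edist d x1 x2 + \<epsilon> * R}"
  have Good_sets: "Good \<in> sets ?M"
    unfolding Good_def using finP by measurable
  have sub: "space ?M - B \<subseteq> Good"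
  proof
    fix G assume G: "G \<in> space ?M - B"
    have top: "(1 - \<epsilon>) * edist d a b \<le> ?E a b G \<and> ?E a b G \<le> (1 + \<epsilon>) * edist d a b"
      if "a \<in> N 0" "b \<in> N 0" for a b
    proof -
      have "(a, b) \<in> I1" using that by (simp add: I1_def)
      then have "G \<notin> Bt (a, b)" using G by (auto simp: B_def)
      then show ?thesis using G by (auto simp: Bt_def not_less)
    qed
    have link: "?E y y' G \<le> (real j + 2) * edist d y y'"
      if "j < M" "y \<in> N j" "y' \<in> N (Suc j)" for j y y'
    proof -
      have "(j, y, y') \<in> I2" using that by (simp add: I2_def)
      then have "G \<notin> Bl (j, y, y')" using G by (auto simp: B_def)
      then have "\<not> (1 + (real j + 1)) * edist d y y' < ?E y y' G" using G by (auto simp: Bl_def)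
      then show ?thesis by (simp add: not_less add.commute add.left_commute)
    qed
    show "G \<in> Good"
      unfolding Good_def
    proof (intro CollectI conjI ballI)
      show "G \<in> space ?M" using G by simp
      fix x1 x2 assume x1: "x1 \<in> P" and x2: "x2 \<in> P"
      obtain a1 where a1: "a1 \<in> N 0" "edist d x1 a1 \<le> \<rho>" "?E x1 a1 G \<le> 9 * \<rho>"
        using chain[OF NP Ncov deep link x1 rho] by blast
      obtain a2 where a2: "a2 \<in> N 0" "edist d x2 a2 \<le> \<rho>" "?E x2 a2 G \<le> 9 * \<rho>"
        using chain[OF NP Ncov deep link x2 rho] by blast
      have "(1 - \<epsilon>) * edist d x1 x2 - \<epsilon> * R \<le> ?E x1 x2 G \<and> ?E x1 x2 G \<le> (1 + \<epsilon>) * edist d x1 x2 + \<epsilon> * R"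
        using top[OF a1(1) a2(1)] by (intro pair_bound[OF eps rho rhoR a1(2,3) a2(2,3)]) auto
      then show "(1 - \<epsilon>) * edist d x1 x2 - \<epsilon> * R \<le> ?E x1 x2 G"
        "?E x1 x2 G \<le> (1 + \<epsilon>) * edist d x1 x2 + \<epsilon> * R" by auto
    qed
  qed
  have "1 - measure ?M B = measure ?M (space ?M - B)" using Bsets by (simp add: prob_compl)
  also have "\<dots> \<le> measure ?M Good" using sub Good_sets by (rule finite_measure_mono)
  finally show ?thesis using mB unfolding Good_def by simp
qed

lemma pow2_ceil_log:
  assumes y: "1 \<le> y"
  shows "y \<le> 2 ^ nat \<lceil>log 2 y\<rceil>" "(2::real) ^ nat \<lceil>log 2 y\<rceil> < 2 * y"
proof -
  have l0: "0 \<le> log 2 y" using y by simp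
  have e: "(2::real) ^ nat \<lceil>log 2 y\<rceil> = 2 powr real (nat \<lceil>log 2 y\<rceil>)" by (simp add: powr_realpow)
  have r: "real (nat \<lceil>log 2 y\<rceil>) = of_int \<lceil>log 2 y\<rceil>" using l0 by simp
  have "y = 2 powr (log 2 y)" using y by simp
  also have "\<dots> \<le> 2 powr real (nat \<lceil>log 2 y\<rceil>)" unfolding r by (intro powr_mono) auto
  finally show "y \<le> 2 ^ nat \<lceil>log 2 y\<rceil>" unfolding e .
  have "2 powr real (nat \<lceil>log 2 y\<rceil>) < 2 powr (log 2 y + 1)"
    unfolding r by (intro powr_less_mono) (linarith, simp)
  also have "\<dots> = 2 * y" using y by (simp add: powr_add)
  finally show "(2::real) ^ nat \<lceil>log 2 y\<rceil> < 2 * y" unfolding e .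
qed

lemma main_fixed:
  fixes \<epsilon> :: real and d k lam :: nat and P :: "(nat \<Rightarrow> real) set"
  assumes eps0: "0 < \<epsilon>" and eps1: "\<epsilon> < 1" and k1: "1 \<le> k" and finP: "finite P"
    and PR: "P \<subseteq> Rd d" and dd: "ddim d P = real lam"
    and tdef: "t = nat \<lceil>64 / \<epsilon>\<^sup>2 * (real lam * ln (2 / \<epsilon>) + ln (real k + 1))\<rceil>"
  shows "2 / 3 \<le> measure (gauss_JL t d)
         {G \<in> space (gauss_JL t d). \<forall>x1\<in>P. \<forall>x2\<in>P.
            (1 - \<epsilon>) * edist d x1 x2 - \<epsilon> * KC d k P
              \<le> edist t (mat_apply t d G x1) (mat_apply t d G x2) \<and>
            edist t (mat_apply t d G x1) (mat_apply t d G x2)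
              \<le> (1 + \<epsilon>) * edist d x1 x2 + \<epsilon> * KC d k P}"
proof -
  define ell where "ell = ln (2 / \<epsilon>)"
  define kap where "kap = ln (real k + 1)"
  define L where "L = real lam * ell + kap"
  have two_eps: "2 \<le> 2 / \<epsilon>" using eps0 eps1 by (simp add: field_simps)
  have l2: "ln 2 \<le> ell" unfolding ell_def using two_eps eps0 by (subst ln_le_cancel_iff) auto
  have ln2: "0 < ln (2::real)" by simp
  have k2: "ln 2 \<le> kap" unfolding kap_def using k1 by simp
  have "0 \<le> ell" using l2 ln2 by linarith
  then have le0: "0 \<le> real lam * ell" by simp
  have L2: "ln 2 \<le> L" unfolding L_def using le0 k2 by linarith
  have Lpos: "0 < L" using L2 ln2 by linarith
  have tge: "64 / \<epsilon>\<^sup>2 * L \<le> real t"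
    unfolding tdef L_def ell_def kap_def by linarith
  have tpos: "0 < t"
  proof -
    have "0 < 64 / \<epsilon>\<^sup>2 * L" using Lpos eps0 by simp
    then show ?thesis using tge by linarith
  qed
  have tL: "64 * L \<le> real t * \<epsilon>\<^sup>2"
    using tge eps0 by (simp add: field_simps)
  show ?thesis
  proof (cases "P = {}")
    case True
    interpret prob_space "gauss_JL t d" by (rule prob_gauss[OF tpos])
    show ?thesis using True by (simp add: prob_space)
  next
    case Pne: False
    obtain S where S: "S \<subseteq> P" "S \<noteq> {}" "card S \<le> k" "\<forall>x\<in>P. \<exists>s\<in>S. edist d x s \<le> KC d k P"
      using KC_cover[OF finP Pne k1] by blast
    define R where "R = KC d k P"
    have R0: "0 \<le> R" unfolding R_def by (rule KC_nonneg[OF finP Pne k1])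
    have kexp: "real k \<le> exp kap" unfolding kap_def by simp
    show ?thesis
    proof (cases "R = 0")
      case True
      have "2 / 3 \<le> measure (gauss_JL t d)
         {G \<in> space (gauss_JL t d). \<forall>x1\<in>P. \<forall>x2\<in>P.
            (1 - \<epsilon>) * edist d x1 x2 - \<epsilon> * R
              \<le> edist t (mat_apply t d G x1) (mat_apply t d G x2) \<and>
            edist t (mat_apply t d G x1) (mat_apply t d G x2)
              \<le> (1 + \<epsilon>) * edist d x1 x2 + \<epsilon> * R}"
      proof (rule core[where N="\<lambda>_. S" and \<rho>=0 and M=0 and L=L])
        show "0 < t" by (rule tpos)
        show "0 < \<epsilon>" "\<epsilon> < 1" "finite P" by fact+
        show "S \<subseteq> P" for j :: nat by (rule S(1))
        show "real (card S) \<le> exp ((real j + 7) * L)" for j :: nat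
        proof -
          have "kap \<le> (real j + 7) * L"
          proof -
            have "kap \<le> L" unfolding L_def using le0 by linarith
            also have "\<dots> \<le> (real j + 7) * L" using Lpos by (simp add: field_simps)
            finally show ?thesis .
          qed
          then have "exp kap \<le> exp ((real j + 7) * L)" by simp
          moreover have "real (card S) \<le> real k" using S(3) by simp
          ultimately show ?thesis using kexp by linarith
        qed
        show "\<forall>x\<in>P. \<exists>y\<in>S. edist d x y \<le> 0 / 2 ^ j" for j :: nat
          using S(4) True by (simp add: R_def)
        show "edist d x y = 0" if "x \<in> P" "y \<in> P" "edist d x y \<le> 0 / 2 ^ 0" for x y
          using that edist_ge0[of d x y] by simp
        show "(0::real) \<le> 0" by simp
        show "22 * 0 \<le> \<epsilon> * R" using True by simp
        show "ln 2 \<le> L" by (rule L2)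
        show "64 * L \<le> real t * \<epsilon>\<^sup>2" by (rule tL)
      qed
      then show ?thesis by (simp add: R_def)
    next
      case False
      then have Rpos: "0 < R" using R0 by simp
      have D: "dprop d P lam" by (rule dprop_exact[OF finP Pne PR dd])
      define m0 where "m0 = nat \<lceil>log 2 (44 / \<epsilon>)\<rceil>"
      have y1: "1 \<le> 44 / \<epsilon>" using eps0 eps1 by (simp add: field_simps)
      have m0a: "44 / \<epsilon> \<le> 2 ^ m0" and m0b: "(2::real) ^ m0 < 2 * (44 / \<epsilon>)"
        using pow2_ceil_log[OF y1] by (simp_all add: m0_def)
      define \<rho> where "\<rho> = 2 * R / 2 ^ m0"
      have rho0: "0 \<le> \<rho>" using Rpos by (simp add: \<rho>_def)
      have rhoR: "22 * \<rho> \<le> \<epsilon> * R"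
      proof -
        have "44 \<le> \<epsilon> * 2 ^ m0" using m0a eps0 by (simp add: field_simps)
        then have "44 * R \<le> \<epsilon> * 2 ^ m0 * R" using Rpos by (intro mult_right_mono) auto
        then show ?thesis unfolding \<rho>_def by (simp add: field_simps)
      qed
      have "\<forall>j. \<exists>N. N \<subseteq> P \<and> card N \<le> k * 2 ^ (lam * (m0 + j)) \<and>
                 (\<forall>x\<in>P. \<exists>y\<in>N. edist d x y \<le> 2 * R / 2 ^ (m0 + j))"
      proof
        fix j
        show "\<exists>N. N \<subseteq> P \<and> card N \<le> k * 2 ^ (lam * (m0 + j)) \<and>
                 (\<forall>x\<in>P. \<exists>y\<in>N. edist d x y \<le> 2 * R / 2 ^ (m0 + j))"
          using nets_exist[OF finP PR D S(1) S(3) S(4)[folded R_def] Rpos, of "m0 + j"] .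
      qed
      then obtain N where N: "\<And>j. N j \<subseteq> P \<and> card (N j) \<le> k * 2 ^ (lam * (m0 + j)) \<and>
                 (\<forall>x\<in>P. \<exists>y\<in>N j. edist d x y \<le> 2 * R / 2 ^ (m0 + j))"
        by metis
      define Dset where "Dset = {e. \<exists>x\<in>P. \<exists>y\<in>P. e = edist d x y \<and> 0 < e}"
      have finD: "finite Dset"
      proof -
        have "Dset \<subseteq> (\<lambda>(x, y). edist d x y) ` (P \<times> P)" by (auto simp: Dset_def)
        then show ?thesis using finP by (auto intro: finite_subset)
      qed
      define \<delta> where "\<delta> = Min (insert 1 Dset)"
      have dpos: "0 < \<delta>"
        unfolding \<delta>_def using finD by (subst Min_gr_iff) (auto simp: Dset_def)
      have dle: "\<delta> \<le> e" if "e \<in> Dset" for e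
        unfolding \<delta>_def using finD that by (intro Min_le) auto
      obtain M where M: "\<rho> / \<delta> < 2 ^ M" using real_arch_pow[of 2 "\<rho> / \<delta>"] by auto
      have rM: "\<rho> / 2 ^ M < \<delta>" using M dpos by (simp add: field_simps)
      have "2 / 3 \<le> measure (gauss_JL t d)
         {G \<in> space (gauss_JL t d). \<forall>x1\<in>P. \<forall>x2\<in>P.
            (1 - \<epsilon>) * edist d x1 x2 - \<epsilon> * R
              \<le> edist t (mat_apply t d G x1) (mat_apply t d G x2) \<and>
            edist t (mat_apply t d G x1) (mat_apply t d G x2)
              \<le> (1 + \<epsilon>) * edist d x1 x2 + \<epsilon> * R}"
      proof (rule core[where N=N and \<rho>=\<rho> and M=M and L=L])
        show "0 < t" by (rule tpos)
        show "0 < \<epsilon>" "\<epsilon> < 1" "finite P" by fact+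
        show "N j \<subseteq> P" for j using N by blast
        show "real (card (N j)) \<le> exp ((real j + 7) * L)" for j
        proof -
          have c: "real (card (N j)) \<le> real k * ((2::real) ^ (m0 + j)) ^ lam"
          proof -
            have "real (card (N j)) \<le> real (k * 2 ^ (lam * (m0 + j)))" using N[of j] by linarith
            also have "\<dots> = real k * ((2::real) ^ (m0 + j)) ^ lam"
              by (simp add: power_mult[symmetric] mult.commute)
            finally show ?thesis .
          qed
          have e7: "88 / \<epsilon> \<le> exp (7 * ell)"
          proof -
            have ex6: "exp (real 6 * ell) = exp ell ^ 6" by (rule exp_of_nat_mult)
            have el: "exp ell = 2 / \<epsilon>" unfolding ell_def using eps0 by simp
            have "exp (7 * ell) = exp (real 6 * ell + ell)" by simp
            also have "\<dots> = (2 / \<epsilon>) ^ 6 * (2 / \<epsilon>)" unfolding exp_add ex6 el ..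
            finally have ex: "exp (7 * ell) = (2 / \<epsilon>) ^ 6 * (2 / \<epsilon>)" .
            have "(2::real) ^ 6 \<le> (2 / \<epsilon>) ^ 6" using two_eps by (intro power_mono) auto
            then have "2 ^ 6 * (2 / \<epsilon>) \<le> (2 / \<epsilon>) ^ 6 * (2 / \<epsilon>)"
              using eps0 by (intro mult_right_mono) auto
            moreover have "(2::real) ^ 6 * (2 / \<epsilon>) = 128 / \<epsilon>" by simp
            moreover have "88 / \<epsilon> \<le> 128 / \<epsilon>" using eps0 by (simp add: field_simps)
            ultimately show ?thesis using ex by linarith
          qed
          have ej: "(2::real) ^ j \<le> exp (real j * ell)"
          proof -
            have "exp (real j * ell) = (2 / \<epsilon>) ^ j"
              unfolding ell_def using eps0 exp_of_nat_mult[of j "ln (2 / \<epsilon>)"] by simp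
            moreover have "(2::real) ^ j \<le> (2 / \<epsilon>) ^ j" using two_eps by (intro power_mono) auto
            ultimately show ?thesis by simp
          qed
          have p: "(2::real) ^ (m0 + j) \<le> exp ((real j + 7) * ell)"
          proof -
            have "(2::real) ^ (m0 + j) = 2 ^ m0 * 2 ^ j" by (simp add: power_add)
            also have "\<dots> \<le> exp (7 * ell) * exp (real j * ell)"
              using m0b e7 ej by (intro mult_mono) auto
            also have "\<dots> = exp ((real j + 7) * ell)" by (simp add: exp_add[symmetric] algebra_simps)
            finally show ?thesis .
          qed
          have "((2::real) ^ (m0 + j)) ^ lam \<le> (exp ((real j + 7) * ell)) ^ lam"
            using p by (intro power_mono) auto
          also have "\<dots> = exp (real lam * ((real j + 7) * ell))" by (simp add: exp_of_nat_mult)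
          finally have pl: "((2::real) ^ (m0 + j)) ^ lam \<le> exp (real lam * ((real j + 7) * ell))" .
          have "real (card (N j)) \<le> exp kap * exp (real lam * ((real j + 7) * ell))"
            using c kexp pl by (smt (verit) mult_mono of_nat_0_le_iff zero_le_power)
          also have "\<dots> = exp (kap + real lam * ((real j + 7) * ell))" by (simp add: exp_add)
          also have "\<dots> \<le> exp ((real j + 7) * L)"
          proof -
            have "0 \<le> kap" using k2 ln2 by linarith
            then have "kap * 1 \<le> kap * (real j + 7)" by (intro mult_left_mono) auto
            then have "kap \<le> (real j + 7) * kap" by (simp add: mult.commute)
            then have "kap + real lam * ((real j + 7) * ell) \<le> (real j + 7) * L"
              unfolding L_def by (simp add: algebra_simps)
            then show ?thesis by simp
          qed
          finally show ?thesis .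
        qed
        show "\<forall>x\<in>P. \<exists>y\<in>N j. edist d x y \<le> \<rho> / 2 ^ j" for j
        proof -
          have "2 * R / 2 ^ (m0 + j) = \<rho> / 2 ^ j" by (simp add: \<rho>_def power_add)
          then show ?thesis using N[of j] by simp
        qed
        show "edist d x y = 0" if xy: "x \<in> P" "y \<in> P" "edist d x y \<le> \<rho> / 2 ^ M" for x y
        proof (rule ccontr)
          assume "edist d x y \<noteq> 0"
          then have "0 < edist d x y" using edist_ge0[of d x y] by linarith
          then have "edist d x y \<in> Dset" using xy by (auto simp: Dset_def)
          then have "\<delta> \<le> edist d x y" by (rule dle)
          then show False using xy(3) rM by linarith
        qed
        show "0 \<le> \<rho>" by (rule rho0)
        show "22 * \<rho> \<le> \<epsilon> * R" by (rule rhoR)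
        show "ln 2 \<le> L" by (rule L2)
        show "64 * L \<le> real t * \<epsilon>\<^sup>2" by (rule tL)
      qed
      then show ?thesis by (simp add: R_def)
    qed
  qed
qed

theorem mainTheorem10:
  shows "\<exists>C::real > 0. \<forall>(\<epsilon>::real) (d::nat) (k::nat) (lam::nat) (P::(nat \<Rightarrow> real) set).
     0 < \<epsilon> \<longrightarrow> \<epsilon> < 1 \<longrightarrow> 1 \<le> k \<longrightarrow> finite P \<longrightarrow> P \<subseteq> Rd d \<longrightarrow> ddim d P = real lam \<longrightarrow>
     (let t = nat \<lceil>C / \<epsilon>\<^sup>2 * (real lam * ln (2 / \<epsilon>) + ln (real k + 1))\<rceil> in
       measure (gauss_JL t d)
         {G \<in> space (gauss_JL t d). \<forall>x1\<in>P. \<forall>x2\<in>P.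
            (1 - \<epsilon>) * edist d x1 x2 - \<epsilon> * KC d k P
              \<le> edist t (mat_apply t d G x1) (mat_apply t d G x2) \<and>
            edist t (mat_apply t d G x1) (mat_apply t d G x2)
              \<le> (1 + \<epsilon>) * edist d x1 x2 + \<epsilon> * KC d k P} \<ge> 2 / 3)"
proof (intro exI[of _ "64::real"] conjI allI impI)
  show "(0::real) < 64" by simp
next
  fix \<epsilon> :: real and d k lam :: nat and P :: "(nat \<Rightarrow> real) set"
  assume a: "0 < \<epsilon>" "\<epsilon> < 1" "1 \<le> k" "finite P" "P \<subseteq> Rd d" "ddim d P = real lam"
  show "let t = nat \<lceil>64 / \<epsilon>\<^sup>2 * (real lam * ln (2 / \<epsilon>) + ln (real k + 1))\<rceil> in
       measure (gauss_JL t d)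
         {G \<in> space (gauss_JL t d). \<forall>x1\<in>P. \<forall>x2\<in>P.
            (1 - \<epsilon>) * edist d x1 x2 - \<epsilon> * KC d k P
              \<le> edist t (mat_apply t d G x1) (mat_apply t d G x2) \<and>
            edist t (mat_apply t d G x1) (mat_apply t d G x2)
              \<le> (1 + \<epsilon>) * edist d x1 x2 + \<epsilon> * KC d k P} \<ge> 2 / 3"
    unfolding Let_def by (rule main_fixed[OF a refl])
qed

end
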